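(* Fix $\lambda\in[0,1)$, $N\ge1$ and $p\in(0,1]$. Let $(\mathbf{V}^{N,p}[n])_{n\ge0}$ and $(\mathbf{V}^{N,0}[n])_{n\ge0}$ be the embedded discrete-time chains of the $N$-station systems with centralization parameters $p$ and $0$, respectively. If $\mathbf{V}^{N,p}[0]=\mathbf{V}^{N,0}[0]$, then $(\mathbf{V}^{N,p}_1[n])_{n\ge0}$ is stochastically dominated by $(\mathbf{V}^{N,0}_1[n])_{n\ge0}$.
   Context: The $N$-station system with parameter $q\in[0,1]$: station $n\in\{1,\dots,N\}$ has queue length $Q_n(t)\in\mathbb{Z}_+$. Tasks arrive to each station according to independent Poisson processes of rate $\lambda$. Each station has an independent Poisson clock of rate $1-q$: at a tick, if $Q_n>0$ one task leaves station $n$, otherwise nothing happens. An independent central Poisson clock of rate $Nq$: at a tick, if $\sum_nQ_n>0$ one task leaves a station chosen uniformly at random among stations with a longest queue, otherwise nothing happens. $\mathbf{V}^{N,q}_i(t)=\sum_{j\ge i}\frac1N\sum_n\mathbb{I}\{Q_n(t)\ge j\}$. The events (arrivals and ticks of all clocks, including ticks that remove no task) form a Poisson process of total rate $N(1+\lambda)$; with $t_0=0$ and $t_n$ the time of the $n$-th event, $\mathbf{V}^{N,q}[n]=\mathbf{V}^{N,q}(t_n)$. A discrete-time process $(X[n])_{n\ge0}$ is stochastically dominated by $(Y[n])_{n\ge0}$ if there exist processes $X',Y'$ on a common probability space with the same distributions as $X,Y$ respectively and $X'[n]\le Y'[n]$ for all $n\ge0$ almost surely. *)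

theory Defs
  imports "HOL-Probability.Probability"
begin

text \<open>States of the N-station system: queue-length vectors Q, where Q n is the queue
length of station n for n < N (values at n \<ge> N are irrelevant and never touched).
Stations are indexed 0..N-1.\<close>

type_synonym qstate = "nat \<Rightarrow> nat"

definition Vvec :: "nat \<Rightarrow> qstate \<Rightarrow> nat \<Rightarrow> real" where
  "Vvec N Q i = (\<Sum>k. (1 / real N) * real (card {n. n < N \<and> i + k \<le> Q n}))"

definition longest :: "nat \<Rightarrow> qstate \<Rightarrow> nat set" where
  "longest N Q = {i. i < N \<and> Q i = Max (Q ` {..<N})}"

text \<open>One-step transition kernel of the embedded discrete-time chain (one event of the
total Poisson process of rate N(1+lam)): with prob. lam/(1+lam) an arrival at a uniformly
chosen station; with prob. (1-q)/(1+lam) a tick of a uniformly chosen station's own clock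
(one departure if nonempty); with prob. q/(1+lam) a tick of the central clock (one departure
from a uniformly chosen longest queue, if the system is nonempty).\<close>
definition step :: "nat \<Rightarrow> real \<Rightarrow> real \<Rightarrow> qstate \<Rightarrow> qstate pmf" where
  "step N lam q Q =
     do { a \<leftarrow> bernoulli_pmf (lam / (1 + lam));
          if a then map_pmf (\<lambda>i. Q(i := Q i + 1)) (pmf_of_set {..<N})
          else do { c \<leftarrow> bernoulli_pmf q;
                    if c then
                      (if (\<forall>i<N. Q i = 0) then return_pmf Q
                       else map_pmf (\<lambda>i. Q(i := Q i - 1)) (pmf_of_set (longest N Q)))
                    else map_pmf (\<lambda>i. Q(i := Q i - 1)) (pmf_of_set {..<N}) } }"

definition markov_chain ::
  "'a measure \<Rightarrow> (nat \<Rightarrow> 'a \<Rightarrow> 's) \<Rightarrow> 's pmf \<Rightarrow> ('s \<Rightarrow> 's pmf) \<Rightarrow> bool" where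
  "markov_chain M X mu K \<longleftrightarrow> prob_space M \<and>
     (\<forall>n. X n \<in> measurable M (count_space UNIV)) \<and>
     (\<forall>n (s :: nat \<Rightarrow> 's).
        measure M {\<omega> \<in> space M. \<forall>k\<le>n. X k \<omega> = s k}
        = pmf mu (s 0) * (\<Prod>k<n. pmf (K (s k)) (s (Suc k))))"

definition process_law :: "'a measure \<Rightarrow> (nat \<Rightarrow> 'a \<Rightarrow> real) \<Rightarrow> (nat \<Rightarrow> real) measure" where
  "process_law M X = distr M (PiM UNIV (\<lambda>_. borel)) (\<lambda>\<omega> n. X n \<omega>)"

text \<open>The common space is taken of type (path \<times> path), which is no loss of generality
(any coupling can be transported to the canonical one on pairs of paths).\<close>
definition stoch_dominated ::
  "'a measure \<Rightarrow> (nat \<Rightarrow> 'a \<Rightarrow> real) \<Rightarrow> 'b measure \<Rightarrow> (nat \<Rightarrow> 'b \<Rightarrow> real) \<Rightarrow> bool" where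
  "stoch_dominated M X M' Y \<longleftrightarrow>
     (\<exists>(\<Omega> :: ((nat \<Rightarrow> real) \<times> (nat \<Rightarrow> real)) measure) X' Y'.
        prob_space \<Omega> \<and>
        (\<forall>n. X' n \<in> borel_measurable \<Omega>) \<and> (\<forall>n. Y' n \<in> borel_measurable \<Omega>) \<and>
        process_law \<Omega> X' = process_law M X \<and> process_law \<Omega> Y' = process_law M' Y \<and>
        (AE \<omega> in \<Omega>. \<forall>n. X' n \<omega> \<le> Y' n \<omega>))"

end

theory Submission
  imports Defs
begin

fun mpath :: "'s pmf \<Rightarrow> ('s \<Rightarrow> 's pmf) \<Rightarrow> nat \<Rightarrow> 's list pmf" where
  "mpath mu K 0 = map_pmf (\<lambda>x. [x]) mu"
| "mpath mu K (Suc n) = bind_pmf (mpath mu K n) (\<lambda>l. map_pmf (\<lambda>x. l @ [x]) (K (last l)))"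

lemma set_path: "l \<in> set_pmf (mpath mu K n) \<Longrightarrow> length l = Suc n"
  by (induction n arbitrary: l) auto

lemma expect_single:
  "measure_pmf.expectation P (\<lambda>x. if x = a then c else 0) = pmf P a * (c::real)"
  by (subst integral_measure_pmf[where A="{a}"]) (auto split: if_splits)

lemma pmf_path:
  "pmf (mpath mu K n) l = (if length l = Suc n then pmf mu (l!0) * (\<Prod>k<n. pmf (K (l!k)) (l!Suc k)) else 0)"
proof (induction n arbitrary: l)
  case 0
  show ?case
  proof (cases "length l = 1")
    case True
    then obtain x where l: "l = [x]" by (cases l) auto
    have "pmf (map_pmf (\<lambda>x. [x]) mu) [x] = pmf mu x"
      by (rule pmf_map_inj') (auto simp: inj_def)
    then show ?thesis using l by simp
  next
    case False
    then show ?thesis by (auto simp: pmf_eq_0_set_pmf)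
  qed
next
  case (Suc n)
  show ?case
  proof (cases "length l = Suc (Suc n)")
    case True
    then obtain l0 x where l: "l = l0 @ [x]" and len: "length l0 = Suc n"
      by (metis length_Suc_conv_rev)
    have "pmf (mpath mu K (Suc n)) l
        = measure_pmf.expectation (mpath mu K n) (\<lambda>l'. pmf (map_pmf (\<lambda>y. l' @ [y]) (K (last l'))) l)"
      by (simp add: pmf_bind)
    also have "\<dots> = measure_pmf.expectation (mpath mu K n) (\<lambda>l'. if l' = l0 then pmf (K (last l0)) x else 0)"
    proof (rule Bochner_Integration.integral_cong[OF refl])
      fix l' show "pmf (map_pmf (\<lambda>y. l' @ [y]) (K (last l'))) l = (if l' = l0 then pmf (K (last l0)) x else 0)"
      proof (cases "l' = l0")
        case True
        have "inj (\<lambda>y. l0 @ [y])" by (auto simp: inj_def)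
        then show ?thesis using l True pmf_map_inj'[of "\<lambda>y. l0 @ [y]" "K (last l0)" x] by simp
      next
        case False
        then show ?thesis using l by (auto intro!: pmf_map_outside)
      qed
    qed
    also have "\<dots> = pmf (mpath mu K n) l0 * pmf (K (last l0)) x"
      by (rule expect_single)
    also have "\<dots> = pmf mu (l!0) * (\<Prod>k<Suc n. pmf (K (l!k)) (l!Suc k))"
    proof -
      have ln: "last l0 = l0 ! n" using len by (metis diff_Suc_1 last_conv_nth list.size(3) nat.distinct(1))
      show ?thesis using len l Suc.IH[of l0] ln
      by (simp add: nth_append lessThan_Suc mult.commute mult.left_commute)
    qed
    finally show ?thesis using True by simp
  next
    case False
    then show ?thesis using set_path[of l mu K "Suc n"] by (auto simp: pmf_eq_0_set_pmf)
  qed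
qed

lemma G1_ge:
  assumes P: "prob_space M" and meas: "\<And>l. {\<omega>\<in>space M. h \<omega> = l} \<in> sets M"
    and eq: "\<And>l. measure M {\<omega>\<in>space M. h \<omega> = l} = pmf Pm l"
    and C: "{\<omega>\<in>space M. h \<omega> \<in> C} \<in> sets M"
  shows "measure_pmf.prob Pm C \<le> measure M {\<omega>\<in>space M. h \<omega> \<in> C}"
proof -
  interpret prob_space M by fact
  define S where "S = C \<inter> set_pmf Pm"
  have cS: "countable S" unfolding S_def by (auto intro: countable_subset)
  have U: "{\<omega>\<in>space M. h \<omega> \<in> S} = (\<Union>l\<in>S. {\<omega>\<in>space M. h \<omega> = l})" by auto
  have US: "(\<Union>l\<in>S. {\<omega>\<in>space M. h \<omega> = l}) \<in> sets M"
    using cS meas by (intro sets.countable_UN'') auto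
  have "emeasure M (\<Union>l\<in>S. {\<omega>\<in>space M. h \<omega> = l}) = (\<integral>\<^sup>+l. emeasure M {\<omega>\<in>space M. h \<omega> = l} \<partial>count_space S)"
    using cS meas by (intro emeasure_UN_countable) (auto simp: disjoint_family_on_def)
  also have "\<dots> = (\<integral>\<^sup>+l. pmf Pm l \<partial>count_space S)"
    using eq by (simp add: emeasure_eq_measure)
  also have "\<dots> = emeasure (measure_pmf Pm) S" by (rule nn_integral_pmf)
  also have "\<dots> = emeasure (measure_pmf Pm) C" unfolding S_def by (rule emeasure_Int_set_pmf)
  finally have e: "emeasure M {\<omega>\<in>space M. h \<omega> \<in> S} = emeasure (measure_pmf Pm) C" using U by simp
  have "{\<omega>\<in>space M. h \<omega> \<in> S} \<subseteq> {\<omega>\<in>space M. h \<omega> \<in> C}" unfolding S_def by auto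
  then have "emeasure M {\<omega>\<in>space M. h \<omega> \<in> S} \<le> emeasure M {\<omega>\<in>space M. h \<omega> \<in> C}"
    using C by (intro emeasure_mono) auto
  with e show ?thesis
    by (simp add: emeasure_eq_measure measure_pmf.emeasure_eq_measure)
qed

lemma G1:
  assumes P: "prob_space M" and meas: "\<And>l. {\<omega>\<in>space M. h \<omega> = l} \<in> sets M"
    and eq: "\<And>l. measure M {\<omega>\<in>space M. h \<omega> = l} = pmf Pm l"
    and C: "{\<omega>\<in>space M. h \<omega> \<in> C} \<in> sets M"
  shows "measure M {\<omega>\<in>space M. h \<omega> \<in> C} = measure_pmf.prob Pm C"
proof -
  interpret prob_space M by fact
  have C': "{\<omega>\<in>space M. h \<omega> \<in> -C} \<in> sets M"
  proof -
    have "{\<omega>\<in>space M. h \<omega> \<in> -C} = space M - {\<omega>\<in>space M. h \<omega> \<in> C}" by auto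
    then show ?thesis using C by auto
  qed
  have 1: "measure_pmf.prob Pm C \<le> measure M {\<omega>\<in>space M. h \<omega> \<in> C}"
    by (rule G1_ge[OF P meas eq C])
  have 2: "measure_pmf.prob Pm (-C) \<le> measure M {\<omega>\<in>space M. h \<omega> \<in> -C}"
    by (rule G1_ge[OF P meas eq C'])
  have 3: "measure M {\<omega>\<in>space M. h \<omega> \<in> -C} = 1 - measure M {\<omega>\<in>space M. h \<omega> \<in> C}"
  proof -
    have "{\<omega>\<in>space M. h \<omega> \<in> -C} = space M - {\<omega>\<in>space M. h \<omega> \<in> C}" by auto
    then show ?thesis using C prob_compl by simp
  qed
  have 4: "measure_pmf.prob Pm (-C) = 1 - measure_pmf.prob Pm C"
    using measure_pmf.prob_compl[of C Pm] by (simp add: Compl_eq_Diff_UNIV)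
  show ?thesis using 1 2 3 4 by linarith
qed

lemma MC_event:
  assumes mc: "markov_chain M X mu K"
   and E: "{\<omega>\<in>space M. map (\<lambda>k. X k \<omega>) [0..<Suc n] \<in> B} \<in> sets M"
  shows "measure M {\<omega>\<in>space M. map (\<lambda>k. X k \<omega>) [0..<Suc n] \<in> B} = measure_pmf.prob (mpath mu K n) B"
proof (rule G1[OF _ _ _ E])
  show P: "prob_space M" using mc unfolding markov_chain_def by auto
  have Xm: "\<And>k. X k \<in> measurable M (count_space UNIV)" using mc unfolding markov_chain_def by auto
  have eqs: "\<And>l. length l = Suc n \<Longrightarrow> {\<omega>\<in>space M. map (\<lambda>k. X k \<omega>) [0..<Suc n] = l} = {\<omega>\<in>space M. \<forall>k\<in>{..n}. X k \<omega> = l!k}"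
    by (auto simp del: upt_Suc simp: list_eq_iff_nth_eq less_Suc_eq_le)
  have eqs2: "\<And>l. length l \<noteq> Suc n \<Longrightarrow> {\<omega>\<in>space M. map (\<lambda>k. X k \<omega>) [0..<Suc n] = l} = {}"
    by auto
  have ms: "\<And>l. {\<omega>\<in>space M. \<forall>k\<in>{..n}. X k \<omega> = l!k} \<in> sets M"
  proof (rule sets.sets_Collect_finite_All')
    fix l k
    have "{\<omega>\<in>space M. X k \<omega> = l!k} = X k -` {l!k} \<inter> space M" by auto
    then show "{\<omega>\<in>space M. X k \<omega> = l!k} \<in> sets M" using measurable_sets[OF Xm[of k], of "{l!k}"] by simp
  qed auto
  show "\<And>l. {\<omega>\<in>space M. map (\<lambda>k. X k \<omega>) [0..<Suc n] = l} \<in> sets M"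
  proof -
    fix l show "{\<omega>\<in>space M. map (\<lambda>k. X k \<omega>) [0..<Suc n] = l} \<in> sets M"
    proof (cases "length l = Suc n")
      case True then show ?thesis by (subst eqs[OF True]) (rule ms)
    next
      case False then show ?thesis by (subst eqs2[OF False]) (rule sets.empty_sets)
    qed
  qed
  show "measure M {\<omega>\<in>space M. map (\<lambda>k. X k \<omega>) [0..<Suc n] = l} = pmf (mpath mu K n) l" for l
  proof (cases "length l = Suc n")
    case True
    have "measure M {\<omega>\<in>space M. \<forall>k\<le>n. X k \<omega> = l!k} = pmf mu (l!0) * (\<Prod>k<n. pmf (K (l!k)) (l!Suc k))"
      using mc unfolding markov_chain_def by blast
    moreover have A: "{\<omega>\<in>space M. \<forall>k\<in>{..n}. X k \<omega> = l!k} = {\<omega>\<in>space M. \<forall>k\<le>n. X k \<omega> = l!k}" by auto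
    ultimately show ?thesis by (subst eqs[OF True], subst A) (simp add: pmf_path True)
  next
    case False
    then show ?thesis by (subst eqs2[OF False]) (simp add: pmf_path False)
  qed
qed

lemma gm_lemma:
  fixes f :: "'s \<Rightarrow> real"
  assumes Am: "\<And>k. A k \<in> measurable M (count_space UNIV)"
  shows "(\<lambda>\<omega> n. f (A n \<omega>)) \<in> measurable M (PiM UNIV (\<lambda>_. borel))"
proof (rule measurable_PiM_single')
  fix i
  show "(\<lambda>\<omega>. f (A i \<omega>)) \<in> borel_measurable M"
    by (rule measurable_compose[OF Am]) (simp add: measurable_count_space_eq1)
qed (simp add: space_PiM)

lemma MC_cyl:
  fixes f :: "'s \<Rightarrow> real"
  assumes mc: "markov_chain M A mu K" and J: "J \<subseteq> {..n}" and F: "\<And>j. j \<in> J \<Longrightarrow> F j \<in> sets borel"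
  shows "emeasure (distr M (PiM UNIV (\<lambda>_. borel)) (\<lambda>\<omega> n. f (A n \<omega>))) (prod_emb UNIV (\<lambda>_. borel) J (PiE J F))
     = measure_pmf.prob (mpath mu K n) {l. \<forall>j\<in>J. f (l!j) \<in> F j}"
proof -
  interpret prob_space M using mc unfolding markov_chain_def by auto
  have Am: "\<And>k. A k \<in> measurable M (count_space UNIV)" using mc unfolding markov_chain_def by auto
  have gm: "(\<lambda>\<omega> n. f (A n \<omega>)) \<in> measurable M (PiM UNIV (\<lambda>_. borel))"
    by (rule gm_lemma[OF Am])
  have Xs: "prod_emb UNIV (\<lambda>_. borel) J (PiE J F) \<in> sets (PiM UNIV (\<lambda>_. borel))"
    using F J finite_subset[OF J] by (auto intro!: sets_PiM_I)
  have pre: "(\<lambda>\<omega> n. f (A n \<omega>)) -` prod_emb UNIV (\<lambda>_. borel) J (PiE J F) \<inter> space M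
     = {\<omega>\<in>space M. map (\<lambda>k. A k \<omega>) [0..<Suc n] \<in> {l. \<forall>j\<in>J. f (l!j) \<in> F j}}"
  proof -
    have e: "\<And>x. (\<lambda>n. f (A n x)) \<in> prod_emb UNIV (\<lambda>_. borel) J (PiE J F) \<longleftrightarrow> (\<forall>j\<in>J. f (A j x) \<in> F j)"
      by (simp add: prod_emb_iff PiE_iff)
    have e2: "\<And>x j. j \<in> J \<Longrightarrow> map (\<lambda>k. A k x) [0..<Suc n] ! j = A j x"
      using J by (auto simp del: upt_Suc simp: less_Suc_eq_le)
    show ?thesis using e e2 by auto
  qed
  have ms: "{\<omega>\<in>space M. map (\<lambda>k. A k \<omega>) [0..<Suc n] \<in> {l. \<forall>j\<in>J. f (l!j) \<in> F j}} \<in> sets M"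
    using measurable_sets[OF gm Xs] pre by simp
  show ?thesis
    apply (subst emeasure_distr[OF gm Xs])
    apply (subst pre)
    apply (simp only: emeasure_eq_measure)
    apply (subst MC_event[OF mc ms])
    apply (simp add: measure_pmf.emeasure_eq_measure)
    done
qed

lemma MC_law:
  fixes f :: "'s \<Rightarrow> real"
  assumes m1: "markov_chain M1 A mu K" and m2: "markov_chain M2 B mu K"
  shows "distr M1 (PiM UNIV (\<lambda>_. borel)) (\<lambda>\<omega> n. f (A n \<omega>)) = distr M2 (PiM UNIV (\<lambda>_. borel)) (\<lambda>\<omega> n. f (B n \<omega>))"
proof (rule measure_eqI_PiM_infinite)
  interpret P1: prob_space M1 using m1 unfolding markov_chain_def by auto
  have Am: "\<And>k. A k \<in> measurable M1 (count_space UNIV)" using m1 unfolding markov_chain_def by auto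
  have gm: "(\<lambda>\<omega> n. f (A n \<omega>)) \<in> measurable M1 (PiM UNIV (\<lambda>_. borel))"
    by (rule gm_lemma[OF Am])
  show "finite_measure (distr M1 (PiM UNIV (\<lambda>_. borel)) (\<lambda>\<omega> n. f (A n \<omega>)))"
    using P1.prob_space_distr[OF gm] unfolding prob_space_def by auto
  fix F :: "nat \<Rightarrow> real set" and J assume J: "finite (J::nat set)" and F: "\<And>i. i \<in> J \<Longrightarrow> F i \<in> sets borel"
  obtain n where n: "J \<subseteq> {..n}" using J finite_nat_iff_bounded_le by auto
  show "emeasure (distr M1 (PiM UNIV (\<lambda>_. borel)) (\<lambda>\<omega> n. f (A n \<omega>))) (prod_emb UNIV (\<lambda>_. borel) J (PiE J F))
     = emeasure (distr M2 (PiM UNIV (\<lambda>_. borel)) (\<lambda>\<omega> n. f (B n \<omega>))) (prod_emb UNIV (\<lambda>_. borel) J (PiE J F))"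
    using MC_cyl[where F=F and f=f, OF m1 n F] MC_cyl[where F=F and f=f, OF m2 n F] by simp
qed simp_all



lemma path_lump:
  assumes mu: "map_pmf f mu' = mu" and K: "\<And>z. map_pmf f (K' z) = K (f z)"
  shows "map_pmf (map f) (mpath mu' K' n) = mpath mu K n"
proof (induction n)
  case 0
  then show ?case using mu by (simp add: map_pmf_comp flip: mu)
next
  case (Suc n)
  have "map_pmf (map f) (mpath mu' K' (Suc n))
      = bind_pmf (mpath mu' K' n) (\<lambda>l. map_pmf (\<lambda>y. map f l @ [y]) (map_pmf f (K' (last l))))"
    by (simp add: map_bind_pmf map_pmf_comp)
  also have "\<dots> = bind_pmf (mpath mu' K' n) (\<lambda>l. map_pmf (\<lambda>y. map f l @ [y]) (K (last (map f l))))"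
  proof (rule bind_pmf_cong[OF refl])
    fix l assume "l \<in> set_pmf (mpath mu' K' n)"
    then have "l \<noteq> []" using set_path by fastforce
    then show "map_pmf (\<lambda>y. map f l @ [y]) (map_pmf f (K' (last l))) = map_pmf (\<lambda>y. map f l @ [y]) (K (last (map f l)))"
      by (simp add: K last_map)
  qed
  also have "\<dots> = mpath mu K (Suc n)"
    by (simp add: bind_map_pmf flip: Suc)
  finally show ?case .
qed

primrec Zc :: "('x \<Rightarrow> 'z) \<Rightarrow> ('z \<Rightarrow> 'x \<Rightarrow> 'z) \<Rightarrow> (nat \<Rightarrow> 'x) \<Rightarrow> nat \<Rightarrow> 'z" where
  "Zc G F \<omega> 0 = G (\<omega> 0)"
| "Zc G F \<omega> (Suc n) = F (Zc G F \<omega> n) (\<omega> (Suc n))"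

lemma Zc_agree: "(\<And>i. i \<le> n \<Longrightarrow> \<omega> i = \<omega>' i) \<Longrightarrow> Zc G F \<omega> n = Zc G F \<omega>' n"
  by (induction n) auto

definition runZ :: "('x \<Rightarrow> 'z) \<Rightarrow> ('z \<Rightarrow> 'x \<Rightarrow> 'z) \<Rightarrow> 'x list \<Rightarrow> 'z list" where
  "runZ G F l = map (\<lambda>k. Zc G F (\<lambda>i. l ! i) k) [0..<length l]"

lemma runZ_snoc:
  assumes "l \<noteq> []"
  shows "runZ G F (l @ [x]) = runZ G F l @ [F (last (runZ G F l)) x]"
proof -
  have a: "Zc G F (\<lambda>i. (l @ [x]) ! i) k = Zc G F (\<lambda>i. l ! i) k" if "k < length l" for k
    using that by (intro Zc_agree) (auto simp: nth_append)
  obtain m where m: "length l = Suc m" using assms by (cases l) auto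
  have b: "Zc G F (\<lambda>i. (l @ [x]) ! i) (length l) = F (Zc G F (\<lambda>i. l ! i) m) x"
  proof -
    have "(l @ [x]) ! Suc m = x" using m nth_append_length[of l x] by simp
    then show ?thesis using m a[of m] by simp
  qed
  have c: "last (runZ G F l) = Zc G F (\<lambda>i. l ! i) m"
    using m by (simp add: runZ_def)
  show ?thesis unfolding runZ_def using a b c m
    by (simp add: runZ_def)
qed

lemma runZ_single: "runZ G F [x] = [G x]"
  by (simp add: runZ_def)

lemma path_run:
  "map_pmf (runZ G F) (mpath xi (\<lambda>_. xi) n) = mpath (map_pmf G xi) (\<lambda>z. map_pmf (F z) xi) n"
proof (induction n)
  case 0
  then show ?case by (simp add: map_pmf_comp runZ_single)
next
  case (Suc n)
  have "map_pmf (runZ G F) (mpath xi (\<lambda>_. xi) (Suc n))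
      = bind_pmf (mpath xi (\<lambda>_. xi) n) (\<lambda>l. map_pmf (\<lambda>x. runZ G F (l @ [x])) xi)"
    by (simp add: map_bind_pmf map_pmf_comp)
  also have "\<dots> = bind_pmf (mpath xi (\<lambda>_. xi) n) (\<lambda>l. map_pmf (\<lambda>y. runZ G F l @ [y]) (map_pmf (F (last (runZ G F l))) xi))"
  proof (rule bind_pmf_cong[OF refl])
    fix l assume "l \<in> set_pmf (mpath xi (\<lambda>_. xi) n)"
    then have "l \<noteq> []" using set_path by fastforce
    then show "map_pmf (\<lambda>x. runZ G F (l @ [x])) xi = map_pmf (\<lambda>y. runZ G F l @ [y]) (map_pmf (F (last (runZ G F l))) xi)"
      by (simp add: runZ_snoc map_pmf_comp)
  qed
  also have "\<dots> = mpath (map_pmf G xi) (\<lambda>z. map_pmf (F z) xi) (Suc n)"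
    by (simp add: bind_map_pmf flip: Suc)
  finally show ?case .
qed

lemma map_event_sets:
  assumes Xm: "\<And>k. X k \<in> measurable M (count_space UNIV)"
  shows "{\<omega>\<in>space M. map (\<lambda>k. X k \<omega>) [0..<Suc n] = l} \<in> sets M"
proof -
  have eqs: "\<And>l. length l = Suc n \<Longrightarrow> {\<omega>\<in>space M. map (\<lambda>k. X k \<omega>) [0..<Suc n] = l} = {\<omega>\<in>space M. \<forall>k\<in>{..n}. X k \<omega> = l!k}"
    by (auto simp del: upt_Suc simp: list_eq_iff_nth_eq less_Suc_eq_le)
  have eqs2: "\<And>l. length l \<noteq> Suc n \<Longrightarrow> {\<omega>\<in>space M. map (\<lambda>k. X k \<omega>) [0..<Suc n] = l} = {}"
    by auto
  have ms: "\<And>l. {\<omega>\<in>space M. \<forall>k\<in>{..n}. X k \<omega> = l!k} \<in> sets M"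
  proof (rule sets.sets_Collect_finite_All')
    fix l k
    have "{\<omega>\<in>space M. X k \<omega> = l!k} = X k -` {l!k} \<inter> space M" by auto
    then show "{\<omega>\<in>space M. X k \<omega> = l!k} \<in> sets M" using measurable_sets[OF Xm[of k], of "{l!k}"] by simp
  qed auto
  show ?thesis
  proof (cases "length l = Suc n")
    case True then show ?thesis by (subst eqs[OF True]) (rule ms)
  next
    case False then show ?thesis by (subst eqs2[OF False]) (rule sets.empty_sets)
  qed
qed

lemma iid_chain:
  fixes xi :: "'x pmf"
  shows "markov_chain (PiM UNIV (\<lambda>_. measure_pmf xi)) (\<lambda>n \<omega>. \<omega> n) xi (\<lambda>_. xi)"
proof -
  interpret product_prob_space "\<lambda>_. measure_pmf xi" UNIV by unfold_locales
  have m: "(\<lambda>\<omega>. \<omega> n) \<in> measurable (PiM UNIV (\<lambda>_. measure_pmf xi)) (count_space UNIV)" for n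
  proof -
    have "(\<lambda>\<omega>. \<omega> n) \<in> measurable (PiM UNIV (\<lambda>_. measure_pmf xi)) (measure_pmf xi)"
      by (rule measurable_component_singleton) simp
    moreover have "sets (measure_pmf xi) = sets (count_space UNIV)" by simp
    ultimately show ?thesis
      using measurable_cong_sets[OF refl, of "measure_pmf xi" "count_space UNIV" "PiM UNIV (\<lambda>_. measure_pmf xi)"] by simp
  qed
  have e: "measure (PiM UNIV (\<lambda>_. measure_pmf xi)) {\<omega>\<in>space (PiM UNIV (\<lambda>_. measure_pmf xi)). \<forall>k\<le>n. \<omega> k = s k}
      = pmf xi (s 0) * (\<Prod>k<n. pmf xi (s (Suc k)))" for n s
  proof -
    have s1: "{\<omega>\<in>space (PiM UNIV (\<lambda>_. measure_pmf xi)). \<forall>k\<le>n. \<omega> k = s k}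
       = {\<omega>\<in>space (PiM UNIV (\<lambda>_. measure_pmf xi)). \<forall>k\<in>{..n}. \<omega> k \<in> {s k}}" by auto
    have s2: "emeasure (PiM UNIV (\<lambda>_. measure_pmf xi)) {\<omega>\<in>space (PiM UNIV (\<lambda>_. measure_pmf xi)). \<forall>k\<in>{..n}. \<omega> k \<in> {s k}}
       = (\<Prod>k\<in>{..n}. emeasure (measure_pmf xi) {s k})"
      by (rule emeasure_PiM_Collect) auto
    have s4: "(\<Prod>k\<in>{..n}. emeasure (measure_pmf xi) {s k}) = ennreal (\<Prod>k\<in>{..n}. pmf xi (s k))"
        by (simp add: emeasure_pmf_single prod_ennreal)
    have "measure (PiM UNIV (\<lambda>_. measure_pmf xi)) {\<omega>\<in>space (PiM UNIV (\<lambda>_. measure_pmf xi)). \<forall>k\<le>n. \<omega> k = s k}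
       = (\<Prod>k\<in>{..n}. pmf xi (s k))"
      unfolding s1 measure_def s2 s4 by (simp add: prod_nonneg)
    also have "\<dots> = pmf xi (s 0) * (\<Prod>k<n. pmf xi (s (Suc k)))"
      by (subst lessThan_Suc_atMost[symmetric], subst prod.lessThan_Suc_shift) simp
    finally show ?thesis .
  qed
  show ?thesis unfolding markov_chain_def using m e
    by (auto simp: prob_space_PiM prob_space_measure_pmf)
qed

lemma MC_transfer:
  fixes xi :: "'x::countable pmf" and G :: "'x \<Rightarrow> 'z" and F :: "'z \<Rightarrow> 'x \<Rightarrow> 'z" and \<phi> :: "'z \<Rightarrow> 's"
  assumes mu: "map_pmf (\<lambda>x. \<phi> (G x)) xi = mu" and K: "\<And>z. map_pmf (\<lambda>x. \<phi> (F z x)) xi = K (\<phi> z)"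
  shows "markov_chain (PiM UNIV (\<lambda>_. measure_pmf xi)) (\<lambda>n \<omega>. \<phi> (Zc G F \<omega> n)) mu K"
proof -
  let ?O = "PiM (UNIV :: nat set) (\<lambda>_. measure_pmf xi)"
  have mc0: "markov_chain ?O (\<lambda>n \<omega>. \<omega> n) xi (\<lambda>_. xi)" by (rule iid_chain)
  have Xm: "\<And>k. (\<lambda>\<omega>. \<omega> k) \<in> measurable ?O (count_space UNIV)"
    using mc0 unfolding markov_chain_def by auto
  have P: "prob_space ?O" using mc0 unfolding markov_chain_def by auto
  define h where "h n \<omega> = map (\<lambda>k. \<omega> k) [0..<Suc n]" for n and \<omega> :: "nat \<Rightarrow> 'x"
  have hm: "h n \<in> measurable ?O (count_space UNIV)" for n
    unfolding measurable_count_space_eq2_countable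
  proof (intro conjI ballI)
    fix l
    have "h n -` {l} \<inter> space ?O = {\<omega>\<in>space ?O. map (\<lambda>k. \<omega> k) [0..<Suc n] = l}"
      by (auto simp: h_def)
    then show "h n -` {l} \<inter> space ?O \<in> sets ?O" using map_event_sets[OF Xm] by simp
  qed auto
  have hn: "h n \<omega> ! i = \<omega> i" if "i \<le> n" for n \<omega> i
    using that by (simp add: h_def nth_map_upt del: upt_Suc)
  have ag: "Zc G F \<omega> k = Zc G F (\<lambda>i. h n \<omega> ! i) k" if "k \<le> n" for n \<omega> k
    using that hn by (intro Zc_agree) auto
  have meas: "(\<lambda>\<omega>. \<phi> (Zc G F \<omega> n)) \<in> measurable ?O (count_space UNIV)" for n
  proof -
    have "(\<lambda>\<omega>. (\<lambda>l. \<phi> (Zc G F (\<lambda>i. l ! i) n)) (h n \<omega>)) \<in> measurable ?O (count_space UNIV)"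
      by (rule measurable_compose[OF hm]) (simp add: measurable_count_space_eq1)
    moreover have "(\<lambda>\<omega>. \<phi> (Zc G F \<omega> n)) = (\<lambda>\<omega>. (\<lambda>l. \<phi> (Zc G F (\<lambda>i. l ! i) n)) (h n \<omega>))"
      by (rule ext) (rule arg_cong[where f=\<phi>], rule ag, simp)
    ultimately show ?thesis by simp
  qed
  have eq: "measure ?O {\<omega>\<in>space ?O. \<forall>k\<le>n. \<phi> (Zc G F \<omega> k) = s k}
        = pmf mu (s 0) * (\<Prod>k<n. pmf (K (s k)) (s (Suc k)))" for n s
  proof -
    define B where "B = {l. \<forall>k\<le>n. \<phi> (Zc G F (\<lambda>i. l ! i) k) = s k}"
    have E: "{\<omega>\<in>space ?O. \<forall>k\<le>n. \<phi> (Zc G F \<omega> k) = s k} = {\<omega>\<in>space ?O. map (\<lambda>k. \<omega> k) [0..<Suc n] \<in> B}"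
    proof -
      have "\<And>\<omega>. (\<forall>k\<le>n. \<phi> (Zc G F \<omega> k) = s k) \<longleftrightarrow> (\<forall>k\<le>n. \<phi> (Zc G F (\<lambda>i. h n \<omega> ! i) k) = s k)"
        by (metis ag)
      then show ?thesis unfolding B_def h_def by simp
    qed
    have Es: "{\<omega>\<in>space ?O. map (\<lambda>k. \<omega> k) [0..<Suc n] \<in> B} \<in> sets ?O"
    proof -
      have "{\<omega>\<in>space ?O. map (\<lambda>k. \<omega> k) [0..<Suc n] \<in> B} = h n -` B \<inter> space ?O" by (auto simp: h_def)
      then show ?thesis using measurable_sets[OF hm[of n], of B] by simp
    qed
    let ?P = "mpath xi (\<lambda>_. xi) n"
    define run where "run l = map \<phi> (runZ G F l)" for l
    have "measure_pmf.prob ?P B = measure_pmf.prob ?P (run -` {map s [0..<Suc n]})"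
    proof -
      have "B \<inter> set_pmf ?P = run -` {map s [0..<Suc n]} \<inter> set_pmf ?P"
      proof (intro set_eqI iffI)
        fix l assume l: "l \<in> B \<inter> set_pmf ?P"
        then have len: "length l = Suc n" using set_path by blast
        show "l \<in> run -` {map s [0..<Suc n]} \<inter> set_pmf ?P"
          using l len by (auto simp: B_def run_def runZ_def list_eq_iff_nth_eq less_Suc_eq_le simp del: upt_Suc)
      next
        fix l assume l: "l \<in> run -` {map s [0..<Suc n]} \<inter> set_pmf ?P"
        then have len: "length l = Suc n" using set_path by blast
        show "l \<in> B \<inter> set_pmf ?P"
          using l len by (auto simp: B_def run_def runZ_def list_eq_iff_nth_eq less_Suc_eq_le simp del: upt_Suc)
      qed
      then show ?thesis by (metis measure_Int_set_pmf)
    qed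
    also have "\<dots> = pmf (map_pmf run ?P) (map s [0..<Suc n])"
      by (simp add: pmf_map)
    also have "map_pmf run ?P = mpath mu K n"
    proof -
      have "map_pmf run ?P = map_pmf (map \<phi>) (map_pmf (runZ G F) ?P)"
        by (simp add: map_pmf_comp run_def[abs_def])
      also have "\<dots> = map_pmf (map \<phi>) (mpath (map_pmf G xi) (\<lambda>z. map_pmf (F z) xi) n)"
        by (simp add: path_run)
      also have "\<dots> = mpath mu K n"
        by (rule path_lump) (simp_all add: map_pmf_comp mu K)
      finally show ?thesis .
    qed
    also have "pmf (mpath mu K n) (map s [0..<Suc n]) = pmf mu (s 0) * (\<Prod>k<n. pmf (K (s k)) (s (Suc k)))"
      by (simp add: pmf_path nth_map_upt del: upt_Suc)
    finally show ?thesis using E MC_event[OF mc0 Es] by simp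
  qed
  show ?thesis unfolding markov_chain_def using P meas eq by auto
qed



definition T :: "nat \<Rightarrow> nat \<Rightarrow> qstate \<Rightarrow> nat" where
  "T N t Q = (\<Sum>n<N. Q n - t)"

definition rk :: "nat \<Rightarrow> qstate \<Rightarrow> nat \<Rightarrow> nat" where
  "rk N Q k = rev (sort_key Q [0..<N]) ! k"

definition incr :: "qstate \<Rightarrow> nat \<Rightarrow> qstate" where "incr Q i = Q(i := Q i + 1)"
definition decr :: "qstate \<Rightarrow> nat \<Rightarrow> qstate" where "decr Q i = Q(i := Q i - 1)"

lemma rk_bij: "bij_betw (rk N Q) {..<N} {..<N}"
proof -
  have "bij_betw ((!) (rev (sort_key Q [0..<N]))) {..<N} {..<N}"
    by (rule bij_betw_nth) auto
  then show ?thesis unfolding rk_def[abs_def] .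
qed

lemma rk_lt: "k < N \<Longrightarrow> rk N Q k < N"
  using rk_bij[of N Q] by (auto dest: bij_betwE)

lemma rk_mono: assumes "i \<le> j" "j < N" shows "Q (rk N Q j) \<le> Q (rk N Q i)"
proof -
  let ?xs = "sort_key Q [0..<N]"
  have s: "sorted (map Q ?xs)" by simp
  have l: "length ?xs = N" by simp
  have "(map Q ?xs) ! (N - Suc j) \<le> (map Q ?xs) ! (N - Suc i)"
    using assms by (intro sorted_nth_mono[OF s]) auto
  then show ?thesis using assms l by (simp add: rk_def rev_nth)
qed

lemma sum_upd:
  fixes N i :: nat and Q :: qstate
  assumes "i < N"
  shows "(\<Sum>n<N. g ((Q(i := v)) n)) + g (Q i) = (\<Sum>n<N. g (Q n)) + (g v :: nat)"
proof -
  have r: "\<And>h. (\<Sum>n<N. h n) = h i + (\<Sum>n\<in>{..<N}-{i}. h n)"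
    using assms by (intro sum.remove) auto
  have c: "(\<Sum>n\<in>{..<N}-{i}. g ((Q(i := v)) n)) = (\<Sum>n\<in>{..<N}-{i}. g (Q n))"
    by (rule sum.cong) auto
  show ?thesis using r[of "\<lambda>n. g ((Q(i := v)) n)"] r[of "\<lambda>n. g (Q n)"] c by simp
qed

lemma T_incr: "i < N \<Longrightarrow> T N t (incr Q i) = T N t Q + (if t \<le> Q i then 1 else 0)"
  using sum_upd[of i N "\<lambda>x. x - t" Q "Q i + 1"] by (auto simp: T_def incr_def)

lemma T_decr: "i < N \<Longrightarrow> T N t (decr Q i) + (if t < Q i then 1 else 0) = T N t Q"
  using sum_upd[of i N "\<lambda>x. x - t" Q "Q i - 1"] by (auto simp: T_def decr_def)

lemma card_eq_sum_if: "card {n. n < (N::nat) \<and> P n} = (\<Sum>n<N. if P n then 1 else 0)"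
proof -
  have "(\<Sum>n<N. if P n then 1 else 0) = (\<Sum>n\<in>{x\<in>{..<N}. P x}. (1::nat))"
    by (rule sum.inter_filter[symmetric]) simp
  also have "\<dots> = card {x\<in>{..<N}. P x}" by simp
  also have "{x\<in>{..<N}. P x} = {n. n < N \<and> P n}" by auto
  finally show ?thesis by simp
qed

lemma T_step: "T N t Q = T N (Suc t) Q + card {n. n < N \<and> Suc t \<le> Q n}"
proof -
  have "T N t Q = (\<Sum>n<N. (Q n - Suc t) + (if Suc t \<le> Q n then 1 else 0))"
    unfolding T_def by (rule sum.cong) auto
  then show ?thesis by (simp add: sum.distrib T_def card_eq_sum_if)
qed

lemma card_ge:
  assumes k: "k < N" and t: "t \<le> Q (rk N Q k)"
  shows "Suc k \<le> card {n. n < N \<and> t \<le> Q n}"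
proof -
  have "rk N Q ` {..k} \<subseteq> {n. n < N \<and> t \<le> Q n}"
  proof
    fix x assume "x \<in> rk N Q ` {..k}"
    then obtain i where i: "i \<le> k" "x = rk N Q i" by auto
    have "t \<le> Q (rk N Q i)" using t rk_mono[OF i(1) k, of Q] by linarith
    then show "x \<in> {n. n < N \<and> t \<le> Q n}" using i k rk_lt[of i N Q] by auto
  qed
  then have c: "card (rk N Q ` {..k}) \<le> card {n. n < N \<and> t \<le> Q n}"
    by (intro card_mono) auto
  have "inj_on (rk N Q) {..k}"
    using rk_bij[of N Q] k by (auto simp: bij_betw_def intro: inj_on_subset)
  then have "card (rk N Q ` {..k}) = Suc k" by (simp add: card_image)
  then show ?thesis using c by simp
qed

lemma card_lt:
  assumes k: "k < N" and t: "Q (rk N Q k) < t"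
  shows "card {n. n < N \<and> t \<le> Q n} \<le> k"
proof -
  have "{n. n < N \<and> t \<le> Q n} \<subseteq> rk N Q ` {..<k}"
  proof
    fix n assume n: "n \<in> {n. n < N \<and> t \<le> Q n}"
    then obtain j where j: "j < N" "n = rk N Q j"
      using rk_bij[of N Q] by (auto simp: bij_betw_def)
    have "j < k"
    proof (rule ccontr)
      assume "\<not> j < k"
      then have "Q (rk N Q j) \<le> Q (rk N Q k)" using j rk_mono[of k j N Q] by auto
      then show False using n j t by auto
    qed
    then show "n \<in> rk N Q ` {..<k}" using j by auto
  qed
  then have "card {n. n < N \<and> t \<le> Q n} \<le> card (rk N Q ` {..<k})"
    by (intro card_mono) auto
  also have "\<dots> \<le> k" using card_image_le[of "{..<k}" "rk N Q"] by simp
  finally show ?thesis .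
qed

definition Inv :: "nat \<Rightarrow> qstate \<Rightarrow> qstate \<Rightarrow> bool" where
  "Inv N a b \<longleftrightarrow> (\<forall>t. T N t a \<le> T N t b)"

lemma Inv_arr:
  assumes I: "Inv N a b" and k: "k < N"
  shows "Inv N (incr a (rk N a k)) (incr b (rk N b k))"
  unfolding Inv_def
proof
  fix t
  let ?x = "a (rk N a k)" and ?y = "b (rk N b k)"
  have A: "T N t (incr a (rk N a k)) = T N t a + (if t \<le> ?x then 1 else 0)" by (rule T_incr[OF rk_lt[OF k]])
  have B: "T N t (incr b (rk N b k)) = T N t b + (if t \<le> ?y then 1 else 0)" by (rule T_incr[OF rk_lt[OF k]])
  have le: "T N t a \<le> T N t b" using I by (simp add: Inv_def)
  show "T N t (incr a (rk N a k)) \<le> T N t (incr b (rk N b k))"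
  proof (cases "t \<le> ?x \<and> \<not> t \<le> ?y")
    case True
    then obtain t' where t': "t = Suc t'" by (cases t) auto
    have ca: "Suc k \<le> card {n. n < N \<and> Suc t' \<le> a n}" using True t' card_ge[OF k, of t a] by simp
    have cb: "card {n. n < N \<and> Suc t' \<le> b n} \<le> k" using True t' card_lt[OF k, of b t] by simp
    have "T N t' a \<le> T N t' b" using I by (simp add: Inv_def)
    then have "T N (Suc t') a < T N (Suc t') b"
      using T_step[of N t' a] T_step[of N t' b] ca cb by linarith
    then have "T N t a < T N t b" using t' by simp
    then show ?thesis using A B by simp
  next
    case False
    then show ?thesis using A B le by auto
  qed
qed

lemma Inv_dep:
  assumes I: "Inv N a b" and k: "k < N"
  shows "Inv N (decr a (rk N a k)) (decr b (rk N b k))"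
  unfolding Inv_def
proof
  fix t
  let ?x = "a (rk N a k)" and ?y = "b (rk N b k)"
  have A: "T N t (decr a (rk N a k)) + (if t < ?x then 1 else 0) = T N t a" by (rule T_decr[OF rk_lt[OF k]])
  have B: "T N t (decr b (rk N b k)) + (if t < ?y then 1 else 0) = T N t b" by (rule T_decr[OF rk_lt[OF k]])
  have le: "T N t a \<le> T N t b" using I by (simp add: Inv_def)
  show "T N t (decr a (rk N a k)) \<le> T N t (decr b (rk N b k))"
  proof (cases "t < ?y \<and> \<not> t < ?x")
    case True
    have ca: "card {n. n < N \<and> Suc t \<le> a n} \<le> k" using True card_lt[OF k, of a "Suc t"] by simp
    have cb: "Suc k \<le> card {n. n < N \<and> Suc t \<le> b n}" using True card_ge[OF k, of "Suc t" b] by simp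
    have "T N (Suc t) a \<le> T N (Suc t) b" using I by (simp add: Inv_def)
    then have "T N t a < T N t b"
      using T_step[of N t a] T_step[of N t b] ca cb by linarith
    then show ?thesis using A B True by simp
  next
    case False
    then show ?thesis using A B le by (auto split: if_splits)
  qed
qed

lemma T_decr_le: "i < N \<Longrightarrow> T N t (decr Q i) \<le> T N t Q"
  using T_decr[of i N t Q] by linarith

lemma Inv_cent:
  assumes I: "Inv N a b" and i: "i < N" and imax: "\<And>n. n < N \<Longrightarrow> a n \<le> a i" and j: "j < N"
  shows "Inv N (decr a i) (decr b j)"
  unfolding Inv_def
proof
  fix t
  have A: "T N t (decr a i) + (if t < a i then 1 else 0) = T N t a" by (rule T_decr[OF i])
  have B: "T N t (decr b j) + (if t < b j then 1 else 0) = T N t b" by (rule T_decr[OF j])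
  have le: "T N t a \<le> T N t b" using I by (simp add: Inv_def)
  show "T N t (decr a i) \<le> T N t (decr b j)"
  proof (cases "t < a i")
    case True
    then show ?thesis using A B le by (auto split: if_splits)
  next
    case False
    then have "T N t a = 0" unfolding T_def using imax
      by (intro sum.neutral) (metis diff_is_0_eq le_trans lessThan_iff not_less)
    then show ?thesis using A by simp
  qed
qed

lemma Vvec_T:
  assumes N: "0 < N"
  shows "Vvec N Q (Suc t) = real (T N t Q) / real N"
proof -
  define K where "K = (\<Sum>n<N. Q n)"
  have QK: "n < N \<Longrightarrow> Q n \<le> K" for n
    unfolding K_def by (rule member_le_sum) auto
  have z: "(1 / real N) * real (card {n. n < N \<and> Suc t + k \<le> Q n}) = 0" if "k \<notin> {..<K}" for k
  proof -
    have "{n. n < N \<and> Suc t + k \<le> Q n} = {}" using that QK by fastforce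
    then show ?thesis by simp
  qed
  have "Vvec N Q (Suc t) = (\<Sum>k<K. (1 / real N) * real (card {n. n < N \<and> Suc t + k \<le> Q n}))"
    unfolding Vvec_def by (rule suminf_finite) (use z in auto)
  also have "\<dots> = (1 / real N) * real (\<Sum>k<K. card {n. n < N \<and> Suc t + k \<le> Q n})"
    by (simp add: sum_distrib_left)
  also have "(\<Sum>k<K. card {n. n < N \<and> Suc t + k \<le> Q n}) = T N t Q"
  proof -
    have "(\<Sum>k<K. card {n. n < N \<and> Suc t + k \<le> Q n}) = (\<Sum>k<K. \<Sum>n<N. if Suc t + k \<le> Q n then 1 else 0)"
      by (simp add: card_eq_sum_if)
    also have "\<dots> = (\<Sum>n<N. \<Sum>k<K. if Suc t + k \<le> Q n then 1 else 0)"
      by (rule sum.swap)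
    also have "\<dots> = (\<Sum>n<N. Q n - t)"
    proof (rule sum.cong[OF refl])
      fix n assume n: "n \<in> {..<N}"
      have "(\<Sum>k<K. if Suc t + k \<le> Q n then 1 else 0) = card {k. k < K \<and> Suc t + k \<le> Q n}"
        by (simp add: card_eq_sum_if)
      also have "{k. k < K \<and> Suc t + k \<le> Q n} = {..<Q n - t}" using QK[of n] n by auto
      finally show "(\<Sum>k<K. if Suc t + k \<le> Q n then 1 else 0) = Q n - t" by simp
    qed
    finally show ?thesis by (simp add: T_def)
  qed
  finally show ?thesis by simp
qed



type_synonym inn = "nat \<times> bool \<times> bool \<times> nat \<times> nat list"

fun RL :: "nat \<Rightarrow> nat list pmf" where
  "RL 0 = return_pmf []"
| "RL (Suc m) = bind_pmf (RL m) (\<lambda>l. map_pmf (\<lambda>u. l @ [u]) (pmf_of_set {..<Suc m}))"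

lemma set_RL: "l \<in> set_pmf (RL n) \<Longrightarrow> length l = n"
  by (induction n arbitrary: l) auto

lemma RL_nth: "m < n \<Longrightarrow> map_pmf (\<lambda>r. r ! m) (RL n) = pmf_of_set {..<Suc m}"
proof (induction n)
  case 0 then show ?case by simp
next
  case (Suc n)
  show ?case
  proof (cases "m < n")
    case True
    have "map_pmf (\<lambda>r. r ! m) (RL (Suc n)) = bind_pmf (RL n) (\<lambda>l. return_pmf (l ! m))"
      unfolding RL.simps map_bind_pmf
    proof (rule bind_pmf_cong[OF refl])
      fix l assume "l \<in> set_pmf (RL n)"
      then have "length l = n" by (rule set_RL)
      then show "map_pmf (\<lambda>r. r ! m) (map_pmf (\<lambda>u. l @ [u]) (pmf_of_set {..<Suc n})) = return_pmf (l ! m)"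
        using True by (simp add: map_pmf_comp nth_append)
    qed
    also have "\<dots> = map_pmf (\<lambda>r. r ! m) (RL n)" by (simp add: map_pmf_def)
    finally show ?thesis using Suc True by simp
  next
    case False
    then have m: "m = n" using Suc by simp
    have "map_pmf (\<lambda>r. r ! m) (RL (Suc n)) = bind_pmf (RL n) (\<lambda>l. pmf_of_set {..<Suc n})"
      unfolding RL.simps map_bind_pmf
    proof (rule bind_pmf_cong[OF refl])
      fix l assume "l \<in> set_pmf (RL n)"
      then have "length l = n" by (rule set_RL)
      then have "(\<lambda>u. (l @ [u]) ! m) = (\<lambda>u. u)" using m by (auto simp: nth_append)
      then show "map_pmf (\<lambda>r. r ! m) (map_pmf (\<lambda>u. l @ [u]) (pmf_of_set {..<Suc n})) = pmf_of_set {..<Suc n}"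
        by (simp add: map_pmf_comp map_pmf_ident)
    qed
    then show ?thesis using m by simp
  qed
qed

definition kk :: "nat \<Rightarrow> nat \<Rightarrow> nat" where "kk N k = min k (N - 1)"

definition sel :: "nat \<Rightarrow> qstate \<Rightarrow> nat list \<Rightarrow> nat" where
  "sel N a r = sorted_list_of_set (longest N a) ! min (r ! (card (longest N a) - 1)) (card (longest N a) - 1)"

definition cst :: "nat \<Rightarrow> qstate \<Rightarrow> nat list \<Rightarrow> qstate" where
  "cst N a r = (if (\<forall>i<N. a i = 0) then a else decr a (sel N a r))"

definition Fa :: "nat \<Rightarrow> qstate \<Rightarrow> inn \<Rightarrow> qstate" where
  "Fa N a x = (case x of (j, arr, c, k, r) \<Rightarrow>
     if arr then incr a (rk N a (kk N k)) else if c then cst N a r else decr a (rk N a (kk N k)))"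

definition Fb :: "nat \<Rightarrow> qstate \<Rightarrow> inn \<Rightarrow> qstate" where
  "Fb N b x = (case x of (j, arr, c, k, r) \<Rightarrow>
     if arr then incr b (rk N b (kk N k)) else decr b (rk N b (kk N k)))"

definition Fm :: "nat \<Rightarrow> qstate \<times> qstate \<Rightarrow> inn \<Rightarrow> qstate \<times> qstate" where
  "Fm N z x = (Fa N (fst z) x, Fb N (snd z) x)"

lemma longest_ne: assumes "1 \<le> N" shows "longest N a \<noteq> {}" "finite (longest N a)"
proof -
  have "Max (a ` {..<N}) \<in> a ` {..<N}" using assms by (intro Max_in) (auto simp: lessThan_empty_iff)
  then show "longest N a \<noteq> {}" unfolding longest_def by auto
  show "finite (longest N a)" unfolding longest_def by auto
qed

lemma sel_in: assumes "1 \<le> N" shows "sel N a r \<in> longest N a"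
proof -
  let ?L = "longest N a"
  have f: "finite ?L" and ne: "?L \<noteq> {}" using longest_ne[OF assms] by auto
  then have c: "card ?L \<ge> 1" by (simp add: Suc_leI card_gt_0_iff)
  have "min (r ! (card ?L - 1)) (card ?L - 1) < length (sorted_list_of_set ?L)"
    using c f by (simp add: length_sorted_list_of_set)
  then show ?thesis unfolding sel_def using f by (metis nth_mem set_sorted_list_of_set)
qed

lemma sel_max: assumes "1 \<le> N" shows "sel N a r < N" "\<And>n. n < N \<Longrightarrow> a n \<le> a (sel N a r)"
proof -
  have s: "sel N a r \<in> longest N a" by (rule sel_in[OF assms])
  then show "sel N a r < N" unfolding longest_def by auto
  fix n assume n: "n < N"
  have "a n \<le> Max (a ` {..<N})" using n by (intro Max_ge) auto
  then show "a n \<le> a (sel N a r)" using s unfolding longest_def by auto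
qed

lemma map_sel: assumes "1 \<le> N" shows "map_pmf (sel N a) (RL N) = pmf_of_set (longest N a)"
proof -
  let ?L = "longest N a" let ?m = "card ?L" let ?s = "sorted_list_of_set ?L"
  have f: "finite ?L" and ne: "?L \<noteq> {}" using longest_ne[OF assms] by auto
  then have c: "?m \<ge> 1" by (simp add: Suc_leI card_gt_0_iff)
  have mN: "?m \<le> N"
  proof -
    have "?L \<subseteq> {..<N}" unfolding longest_def by auto
    then show ?thesis by (metis card_lessThan card_mono finite_lessThan)
  qed
  have "map_pmf (sel N a) (RL N) = map_pmf (\<lambda>u. ?s ! min u (?m - 1)) (map_pmf (\<lambda>r. r ! (?m - 1)) (RL N))"
    by (simp add: map_pmf_comp sel_def[abs_def])
  also have "map_pmf (\<lambda>r. r ! (?m - 1)) (RL N) = pmf_of_set {..<?m}"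
    using RL_nth[of "?m - 1" N] c mN by simp
  also have "map_pmf (\<lambda>u. ?s ! min u (?m - 1)) (pmf_of_set {..<?m}) = map_pmf (\<lambda>u. ?s ! u) (pmf_of_set {..<?m})"
    by (rule map_pmf_cong[OF refl]) (use c in \<open>auto simp: min_def lessThan_empty_iff\<close>)
  also have "\<dots> = pmf_of_set ((\<lambda>u. ?s ! u) ` {..<?m})"
  proof (rule map_pmf_of_set_inj)
    show "inj_on ((!) ?s) {..<?m}"
      by (rule inj_on_nth) (auto simp: f distinct_sorted_list_of_set length_sorted_list_of_set)
  qed (use c in \<open>auto simp: lessThan_empty_iff\<close>)
  also have "(\<lambda>u. ?s ! u) ` {..<?m} = ?L"
  proof -
    have "(\<lambda>u. ?s ! u) ` {..<length ?s} = set ?s" by (auto simp: set_conv_nth)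
    then show ?thesis using f by (simp add: length_sorted_list_of_set)
  qed
  finally show ?thesis .
qed

lemma map_pair_bind: "map_pmf f (pair_pmf A B) = bind_pmf A (\<lambda>x. map_pmf (\<lambda>y. f (x, y)) B)"
  unfolding pair_pmf_def map_bind_pmf by (simp add: map_pmf_def bind_assoc_pmf bind_return_pmf)

lemma map_pair_fst': "map_pmf (\<lambda>y. f (fst y)) (pair_pmf A B) = map_pmf f A"
  using map_pmf_comp[of f fst "pair_pmf A B"] by (simp add: map_fst_pair_pmf)

lemma map_pair_snd': "map_pmf (\<lambda>y. f (snd y)) (pair_pmf A B) = map_pmf f B"
  using map_pmf_comp[of f snd "pair_pmf A B"] by (simp add: map_snd_pair_pmf)

lemma map_pair_snd'': "(\<And>x. g x = f (snd x)) \<Longrightarrow> map_pmf g (pair_pmf A B) = map_pmf f B"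
proof -
  assume "\<And>x. g x = f (snd x)"
  then have "g = (\<lambda>x. f (snd x))" by auto
  then show ?thesis by (simp add: map_pair_snd')
qed

lemma map_rk: assumes "1 \<le> N" shows "map_pmf (\<lambda>k. rk N a (kk N k)) (pmf_of_set {..<N}) = pmf_of_set {..<N}"
proof -
  have ne: "{..<N} \<noteq> {}" using assms by (auto simp: lessThan_empty_iff)
  have "map_pmf (\<lambda>k. rk N a (kk N k)) (pmf_of_set {..<N}) = map_pmf (rk N a) (pmf_of_set {..<N})"
    by (rule map_pmf_cong[OF refl]) (use ne in \<open>auto simp: kk_def\<close>)
  also have "\<dots> = pmf_of_set (rk N a ` {..<N})"
    using rk_bij[of N a] ne by (intro map_pmf_of_set_inj) (auto simp: bij_betw_def)
  also have "rk N a ` {..<N} = {..<N}" using rk_bij[of N a] by (simp add: bij_betw_def)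
  finally show ?thesis .
qed

lemma bern0: "bernoulli_pmf 0 = return_pmf False"
  by (rule pmf_eqI) (case_tac i, auto)

lemma marg_a:
  assumes N: "1 \<le> N"
  shows "map_pmf (Fa N a) (pair_pmf J (pair_pmf (bernoulli_pmf al) (pair_pmf (bernoulli_pmf p) (pair_pmf (pmf_of_set {..<N}) (RL N)))))
     = bind_pmf (bernoulli_pmf al) (\<lambda>arr. if arr then map_pmf (\<lambda>i. a(i := a i + 1)) (pmf_of_set {..<N})
          else bind_pmf (bernoulli_pmf p) (\<lambda>c. if c then
                      (if (\<forall>i<N. a i = 0) then return_pmf a
                       else map_pmf (\<lambda>i. a(i := a i - 1)) (pmf_of_set (longest N a)))
                    else map_pmf (\<lambda>i. a(i := a i - 1)) (pmf_of_set {..<N})))"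
proof -
  let ?U = "pmf_of_set {..<N}"
  have e1: "map_pmf (\<lambda>y. incr a (rk N a (kk N (fst y)))) (pair_pmf ?U (RL N)) = map_pmf (\<lambda>i. a(i := a i + 1)) ?U"
  proof -
    have "map_pmf (\<lambda>y. incr a (rk N a (kk N (fst y)))) (pair_pmf ?U (RL N)) = map_pmf (\<lambda>k. incr a (rk N a (kk N k))) ?U"
      by (rule map_pair_fst')
    also have "\<dots> = map_pmf (\<lambda>i. incr a i) (map_pmf (\<lambda>k. rk N a (kk N k)) ?U)" by (simp add: map_pmf_comp)
    also have "\<dots> = map_pmf (\<lambda>i. incr a i) ?U" by (simp only: map_rk[OF N])
    finally show ?thesis by (simp add: incr_def)
  qed
  have e2: "map_pmf (\<lambda>y. decr a (rk N a (kk N (fst y)))) (pair_pmf ?U (RL N)) = map_pmf (\<lambda>i. a(i := a i - 1)) ?U"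
  proof -
    have "map_pmf (\<lambda>y. decr a (rk N a (kk N (fst y)))) (pair_pmf ?U (RL N)) = map_pmf (\<lambda>k. decr a (rk N a (kk N k))) ?U"
      by (rule map_pair_fst')
    also have "\<dots> = map_pmf (\<lambda>i. decr a i) (map_pmf (\<lambda>k. rk N a (kk N k)) ?U)" by (simp add: map_pmf_comp)
    also have "\<dots> = map_pmf (\<lambda>i. decr a i) ?U" by (simp only: map_rk[OF N])
    finally show ?thesis by (simp add: decr_def)
  qed
  have e3: "map_pmf (\<lambda>y. cst N a (snd y)) (pair_pmf ?U (RL N)) = (if (\<forall>i<N. a i = 0) then return_pmf a
                       else map_pmf (\<lambda>i. a(i := a i - 1)) (pmf_of_set (longest N a)))"
  proof (cases "\<forall>i<N. a i = 0")
    case True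
    then show ?thesis by (simp add: map_pair_snd' cst_def)
  next
    case False
    then have "map_pmf (\<lambda>y. cst N a (snd y)) (pair_pmf ?U (RL N)) = map_pmf (\<lambda>i. a(i := a i - 1)) (map_pmf (sel N a) (RL N))"
    proof -
      have c: "cst N a = (\<lambda>r. decr a (sel N a r))" by (rule ext) (simp only: cst_def if_not_P[OF False])
      have "map_pmf (\<lambda>y. cst N a (snd y)) (pair_pmf ?U (RL N)) = map_pmf (cst N a) (RL N)"
        by (rule map_pair_snd')
      then have "map_pmf (\<lambda>y. cst N a (snd y)) (pair_pmf ?U (RL N)) = map_pmf (\<lambda>r. decr a (sel N a r)) (RL N)"
        by (simp only: c)
      then show ?thesis by (simp add: decr_def map_pmf_comp)
    qed
    then show ?thesis using map_sel[OF N, of a] by (subst if_not_P[OF False]) simp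
  qed
  let ?R3 = "pair_pmf ?U (RL N)"
  let ?R2 = "pair_pmf (bernoulli_pmf p) ?R3"
  have s1: "map_pmf (Fa N a) (pair_pmf J (pair_pmf (bernoulli_pmf al) ?R2)) = map_pmf (\<lambda>y. Fa N a (0, y)) (pair_pmf (bernoulli_pmf al) ?R2)"
  proof -
    show ?thesis by (rule map_pair_snd'') (auto simp: Fa_def split: prod.splits)
  qed
  have s2: "map_pmf (\<lambda>y. Fa N a (0, y)) (pair_pmf (bernoulli_pmf al) ?R2) = bind_pmf (bernoulli_pmf al) (\<lambda>arr. map_pmf (\<lambda>y. Fa N a (0, arr, y)) ?R2)"
    by (rule map_pair_bind)
  have t: "map_pmf (\<lambda>y. Fa N a (0, True, y)) ?R2 = map_pmf (\<lambda>i. a(i := a i + 1)) ?U"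
  proof -
    have "map_pmf (\<lambda>y. Fa N a (0, True, y)) ?R2 = map_pmf (\<lambda>z. incr a (rk N a (kk N (fst z)))) ?R3"
      by (rule map_pair_snd'') (auto simp: Fa_def split: prod.splits)
    then show ?thesis using e1 by simp
  qed
  have f: "map_pmf (\<lambda>y. Fa N a (0, False, y)) ?R2 = bind_pmf (bernoulli_pmf p) (\<lambda>c. if c then
                      (if (\<forall>i<N. a i = 0) then return_pmf a
                       else map_pmf (\<lambda>i. a(i := a i - 1)) (pmf_of_set (longest N a)))
                    else map_pmf (\<lambda>i. a(i := a i - 1)) (pmf_of_set {..<N}))"
  proof -
    have "map_pmf (\<lambda>y. Fa N a (0, False, y)) ?R2 = bind_pmf (bernoulli_pmf p) (\<lambda>c. map_pmf (\<lambda>z. Fa N a (0, False, c, z)) ?R3)"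
      by (rule map_pair_bind)
    also have "\<dots> = bind_pmf (bernoulli_pmf p) (\<lambda>c. if c then
                      (if (\<forall>i<N. a i = 0) then return_pmf a
                       else map_pmf (\<lambda>i. a(i := a i - 1)) (pmf_of_set (longest N a)))
                    else map_pmf (\<lambda>i. a(i := a i - 1)) (pmf_of_set {..<N}))"
    proof (rule bind_pmf_cong[OF refl])
      fix c :: bool
      show "map_pmf (\<lambda>z. Fa N a (0, False, c, z)) ?R3 = (if c then
                      (if (\<forall>i<N. a i = 0) then return_pmf a
                       else map_pmf (\<lambda>i. a(i := a i - 1)) (pmf_of_set (longest N a)))
                    else map_pmf (\<lambda>i. a(i := a i - 1)) (pmf_of_set {..<N}))"
      proof (cases c)
        case True
        have "(\<lambda>z. Fa N a (0, False, c, z)) = (\<lambda>y. cst N a (snd y))"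
          using True by (intro ext) (auto simp: Fa_def split: prod.splits)
        then show ?thesis using e3 True by simp
      next
        case False
        have "(\<lambda>z. Fa N a (0, False, c, z)) = (\<lambda>y. decr a (rk N a (kk N (fst y))))"
          using False by (intro ext) (auto simp: Fa_def split: prod.splits)
        then show ?thesis using e2 False by simp
      qed
    qed
    finally show ?thesis .
  qed
  show ?thesis unfolding s1 s2
    by (rule bind_pmf_cong[OF refl]) (use t f in auto)
qed

lemma marg_b:
  assumes N: "1 \<le> N"
  shows "map_pmf (Fb N b) (pair_pmf J (pair_pmf (bernoulli_pmf (lam / (1 + lam))) (pair_pmf (bernoulli_pmf p) (pair_pmf (pmf_of_set {..<N}) (RL N)))))
     = step N lam 0 b"
proof -
  let ?U = "pmf_of_set {..<N}"
  let ?R3 = "pair_pmf ?U (RL N)"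
  let ?R2 = "pair_pmf (bernoulli_pmf p) ?R3"
  let ?al = "lam / (1 + lam)"
  have e1: "map_pmf (\<lambda>y. incr b (rk N b (kk N (fst y)))) ?R3 = map_pmf (\<lambda>i. b(i := b i + 1)) ?U"
  proof -
    have "map_pmf (\<lambda>y. incr b (rk N b (kk N (fst y)))) ?R3 = map_pmf (\<lambda>k. incr b (rk N b (kk N k))) ?U"
      by (rule map_pair_fst')
    also have "\<dots> = map_pmf (\<lambda>i. incr b i) (map_pmf (\<lambda>k. rk N b (kk N k)) ?U)" by (simp add: map_pmf_comp)
    also have "\<dots> = map_pmf (\<lambda>i. incr b i) ?U" by (simp only: map_rk[OF N])
    finally show ?thesis by (simp add: incr_def)
  qed
  have e2: "map_pmf (\<lambda>y. decr b (rk N b (kk N (fst y)))) ?R3 = map_pmf (\<lambda>i. b(i := b i - 1)) ?U"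
  proof -
    have "map_pmf (\<lambda>y. decr b (rk N b (kk N (fst y)))) ?R3 = map_pmf (\<lambda>k. decr b (rk N b (kk N k))) ?U"
      by (rule map_pair_fst')
    also have "\<dots> = map_pmf (\<lambda>i. decr b i) (map_pmf (\<lambda>k. rk N b (kk N k)) ?U)" by (simp add: map_pmf_comp)
    also have "\<dots> = map_pmf (\<lambda>i. decr b i) ?U" by (simp only: map_rk[OF N])
    finally show ?thesis by (simp add: decr_def)
  qed
  have s1: "map_pmf (Fb N b) (pair_pmf J (pair_pmf (bernoulli_pmf ?al) ?R2)) = map_pmf (\<lambda>y. Fb N b (0, y)) (pair_pmf (bernoulli_pmf ?al) ?R2)"
    by (rule map_pair_snd'') (auto simp: Fb_def split: prod.splits)
  have s2: "map_pmf (\<lambda>y. Fb N b (0, y)) (pair_pmf (bernoulli_pmf ?al) ?R2) = bind_pmf (bernoulli_pmf ?al) (\<lambda>arr. map_pmf (\<lambda>y. Fb N b (0, arr, y)) ?R2)"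
    by (rule map_pair_bind)
  have t: "map_pmf (\<lambda>y. Fb N b (0, True, y)) ?R2 = map_pmf (\<lambda>i. b(i := b i + 1)) ?U"
  proof -
    have "map_pmf (\<lambda>y. Fb N b (0, True, y)) ?R2 = map_pmf (\<lambda>z. incr b (rk N b (kk N (fst z)))) ?R3"
      by (rule map_pair_snd'') (auto simp: Fb_def split: prod.splits)
    then show ?thesis using e1 by simp
  qed
  have f: "map_pmf (\<lambda>y. Fb N b (0, False, y)) ?R2 = map_pmf (\<lambda>i. b(i := b i - 1)) ?U"
  proof -
    have "map_pmf (\<lambda>y. Fb N b (0, False, y)) ?R2 = map_pmf (\<lambda>z. decr b (rk N b (kk N (fst z)))) ?R3"
      by (rule map_pair_snd'') (auto simp: Fb_def split: prod.splits)
    then show ?thesis using e2 by simp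
  qed
  show ?thesis unfolding s1 s2 step_def bern0 bind_return_pmf
    by (rule bind_pmf_cong[OF refl]) (use t f in auto)
qed

lemma marg_a':
  assumes N: "1 \<le> N"
  shows "map_pmf (Fa N a) (pair_pmf J (pair_pmf (bernoulli_pmf (lam / (1 + lam))) (pair_pmf (bernoulli_pmf p) (pair_pmf (pmf_of_set {..<N}) (RL N)))))
     = step N lam p a"
  unfolding step_def by (rule marg_a[OF N])

lemma Inv_F:
  assumes N: "1 \<le> N" and I: "Inv N a b"
  shows "Inv N (Fa N a x) (Fb N b x)"
proof -
  obtain j arr c k r where x: "x = (j, arr, c, k, r)" by (cases x) auto
  have kN: "kk N k < N" using N by (simp add: kk_def)
  show ?thesis
  proof (cases arr)
    case True
    then show ?thesis using Inv_arr[OF I kN] by (simp add: x Fa_def Fb_def)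
  next
    case arrF: False
    show ?thesis
    proof (cases c)
      case False
      then show ?thesis using arrF Inv_dep[OF I kN] by (simp add: x Fa_def Fb_def)
    next
      case True
      have jN: "rk N b (kk N k) < N" by (rule rk_lt[OF kN])
      show ?thesis
      proof (cases "\<forall>i<N. a i = 0")
        case z: True
        have "Inv N a (decr b (rk N b (kk N k)))"
          unfolding Inv_def
        proof
          fix t
          have "T N t a = 0" unfolding T_def using z by simp
          then show "T N t a \<le> T N t (decr b (rk N b (kk N k)))" by simp
        qed
        then show ?thesis using arrF True z by (simp add: x Fa_def Fb_def cst_def)
      next
        case nz: False
        have "Inv N (decr a (sel N a r)) (decr b (rk N b (kk N k)))"
          by (rule Inv_cent[OF I sel_max(1)[OF N] sel_max(2)[OF N] jN])
        then show ?thesis using arrF True by (simp add: x Fa_def Fb_def cst_def if_not_P[OF nz])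
      qed
    qed
  qed
qed



lemma cond_cancel: "bind_pmf (map_pmf f q) (\<lambda>v. cond_pmf q {y. f y = v}) = q"
  by (rule bind_cond_pmf_cancel) (auto simp: measure_map_pmf vimage_def)

lemma Inv_init:
  assumes N: "0 < N" and e: "Vvec N a = Vvec N b"
  shows "Inv N a b"
  unfolding Inv_def
proof
  fix t
  have h: "Vvec N a (Suc t) = Vvec N b (Suc t)" using e by simp
  have "real (T N t a) / real N = real (T N t b) / real N"
    using h by (simp only: Vvec_T[OF N])
  then show "T N t a \<le> T N t b" using N by (auto simp: divide_cancel_right)
qed

lemma V1_le:
  assumes N: "0 < N" and I: "Inv N a b"
  shows "Vvec N a 1 \<le> Vvec N b 1"
proof -
  have "T N 0 a \<le> T N 0 b" using I by (simp add: Inv_def)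
  then show ?thesis using Vvec_T[OF N, of a 0] Vvec_T[OF N, of b 0] N
    by (simp add: divide_right_mono)
qed

theorem lemma8:
  fixes lam p :: real and N :: nat and mu_p mu_0 :: "qstate pmf"
    and M :: "'a measure" and X :: "nat \<Rightarrow> 'a \<Rightarrow> qstate"
    and M' :: "'b measure" and Y :: "nat \<Rightarrow> 'b \<Rightarrow> qstate"
  assumes "0 \<le> lam" and "lam < 1" and "1 \<le> N" and "0 < p" and "p \<le> 1"
    and "markov_chain M X mu_p (step N lam p)"
    and "markov_chain M' Y mu_0 (step N lam 0)"
    and "map_pmf (Vvec N) mu_p = map_pmf (Vvec N) mu_0"
  shows "stoch_dominated M (\<lambda>n \<omega>. Vvec N (X n \<omega>) 1) M' (\<lambda>n \<omega>. Vvec N (Y n \<omega>) 1)"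
proof -
  note N = assms(3) and mcX = assms(6) and mcY = assms(7) and V0 = assms(8)
  have N0: "0 < N" using N by simp
  define nu where "nu = bind_pmf (map_pmf (Vvec N) mu_p)
     (\<lambda>v. pair_pmf (cond_pmf mu_p {Q. Vvec N Q = v}) (cond_pmf mu_0 {Q. Vvec N Q = v}))"
  define S where "S = set_pmf nu"
  define J where "J = map_pmf (to_nat_on S) nu"
  define xi :: "inn pmf" where "xi = pair_pmf J (pair_pmf (bernoulli_pmf (lam / (1 + lam)))
      (pair_pmf (bernoulli_pmf p) (pair_pmf (pmf_of_set {..<N}) (RL N))))"
  define Gm where "Gm x = from_nat_into S (fst x)" for x :: inn
  let ?O = "PiM (UNIV :: nat set) (\<lambda>_. measure_pmf xi)"
  define Z where "Z n \<omega> = Zc Gm (Fm N) \<omega> n" for n \<omega>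
  have fst_nu: "map_pmf fst nu = mu_p"
    unfolding nu_def map_bind_pmf map_fst_pair_pmf by (rule cond_cancel)
  have snd_nu: "map_pmf snd nu = mu_0"
    unfolding nu_def map_bind_pmf map_snd_pair_pmf V0 by (rule cond_cancel)
  have cS: "countable S" unfolding S_def by simp
  have SG: "map_pmf (\<lambda>x. from_nat_into S (fst x)) xi = nu"
  proof -
    have "map_pmf (\<lambda>x. from_nat_into S (fst x)) xi = map_pmf (from_nat_into S) J"
      unfolding xi_def by (rule map_pair_fst')
    also have "\<dots> = map_pmf (\<lambda>z. from_nat_into S (to_nat_on S z)) nu" by (simp add: J_def map_pmf_comp)
    also have "\<dots> = map_pmf (\<lambda>z. z) nu" by (rule map_pmf_cong[OF refl]) (simp add: cS S_def)
    finally show ?thesis by (simp add: map_pmf_ident)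
  qed
  have mcA: "markov_chain ?O (\<lambda>n \<omega>. fst (Zc Gm (Fm N) \<omega> n)) mu_p (step N lam p)"
  proof (rule MC_transfer)
    show "map_pmf (\<lambda>x. fst (Gm x)) xi = mu_p"
    proof -
      have "map_pmf (\<lambda>x. fst (Gm x)) xi = map_pmf fst (map_pmf (\<lambda>x. from_nat_into S (fst x)) xi)"
        by (simp add: map_pmf_comp Gm_def)
      then show ?thesis using SG fst_nu by simp
    qed
    show "map_pmf (\<lambda>x. fst (Fm N z x)) xi = step N lam p (fst z)" for z
      unfolding xi_def Fm_def fst_conv by (rule marg_a'[OF N])
  qed
  have mcB: "markov_chain ?O (\<lambda>n \<omega>. snd (Zc Gm (Fm N) \<omega> n)) mu_0 (step N lam 0)"
  proof (rule MC_transfer)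
    show "map_pmf (\<lambda>x. snd (Gm x)) xi = mu_0"
    proof -
      have "map_pmf (\<lambda>x. snd (Gm x)) xi = map_pmf snd (map_pmf (\<lambda>x. from_nat_into S (fst x)) xi)"
        by (simp add: map_pmf_comp Gm_def)
      then show ?thesis using SG snd_nu by simp
    qed
    show "map_pmf (\<lambda>x. snd (Fm N z x)) xi = step N lam 0 (snd z)" for z
      unfolding xi_def Fm_def snd_conv by (rule marg_b[OF N])
  qed
  have Vnu: "Vvec N (fst z) = Vvec N (snd z)" if z: "z \<in> set_pmf nu" for z
  proof -
    obtain v where v: "v \<in> set_pmf (map_pmf (Vvec N) mu_p)"
      and zz: "z \<in> set_pmf (pair_pmf (cond_pmf mu_p {Q. Vvec N Q = v}) (cond_pmf mu_0 {Q. Vvec N Q = v}))"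
      using z unfolding nu_def by auto
    have ne1: "set_pmf mu_p \<inter> {Q. Vvec N Q = v} \<noteq> {}" using v by auto
    have ne2: "set_pmf mu_0 \<inter> {Q. Vvec N Q = v} \<noteq> {}" using v unfolding V0 by auto
    show ?thesis using zz set_cond_pmf[OF ne1] set_cond_pmf[OF ne2] by (cases z) auto
  qed
  have SnE: "S \<noteq> {}" unfolding S_def by (rule set_pmf_not_empty)
  have inv: "Inv N (fst (Z n \<omega>)) (snd (Z n \<omega>))" for n \<omega>
  proof (induction n)
    case 0
    have "Gm (\<omega> 0) \<in> S" unfolding Gm_def by (rule from_nat_into[OF SnE])
    then show ?case using Vnu[of "Gm (\<omega> 0)"] Inv_init[OF N0] by (simp add: Z_def S_def)
  next
    case (Suc n)
    then show ?case using Inv_F[OF N] by (simp add: Z_def Fm_def)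
  qed
  define p1 where "p1 \<omega> = (\<lambda>n. Vvec N (fst (Z n \<omega>)) 1)" for \<omega>
  define p2 where "p2 \<omega> = (\<lambda>n. Vvec N (snd (Z n \<omega>)) 1)" for \<omega>
  let ?P = "PiM (UNIV :: nat set) (\<lambda>_. borel :: real measure)"
  have PO: "prob_space ?O" using mcA unfolding markov_chain_def by auto
  have Am: "\<And>k. (\<lambda>\<omega>. fst (Zc Gm (Fm N) \<omega> k)) \<in> measurable ?O (count_space UNIV)"
    using mcA unfolding markov_chain_def by auto
  have Bm: "\<And>k. (\<lambda>\<omega>. snd (Zc Gm (Fm N) \<omega> k)) \<in> measurable ?O (count_space UNIV)"
    using mcB unfolding markov_chain_def by auto
  have p1m: "p1 \<in> measurable ?O ?P"
    unfolding p1_def Z_def by (rule gm_lemma[OF Am])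
  have p2m: "p2 \<in> measurable ?O ?P"
    unfolding p2_def Z_def by (rule gm_lemma[OF Bm])
  have pm: "(\<lambda>\<omega>. (p1 \<omega>, p2 \<omega>)) \<in> measurable ?O (?P \<Otimes>\<^sub>M ?P)"
    using p1m p2m by (rule measurable_Pair)
  define \<Omega> where "\<Omega> = distr ?O (?P \<Otimes>\<^sub>M ?P) (\<lambda>\<omega>. (p1 \<omega>, p2 \<omega>))"
  define X' where "X' n \<omega> = fst \<omega> n" for n and \<omega> :: "(nat \<Rightarrow> real) \<times> (nat \<Rightarrow> real)"
  define Y' where "Y' n \<omega> = snd \<omega> n" for n and \<omega> :: "(nat \<Rightarrow> real) \<times> (nat \<Rightarrow> real)"
  have sO: "sets \<Omega> = sets (?P \<Otimes>\<^sub>M ?P)" unfolding \<Omega>_def by simp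
  have probO: "prob_space \<Omega>" unfolding \<Omega>_def by (rule prob_space.prob_space_distr[OF PO pm])
  have fm: "(\<lambda>\<omega>. \<omega>) \<in> measurable \<Omega> (?P \<Otimes>\<^sub>M ?P)"
    using measurable_ident_sets[OF sO] .
  have eM: "measurable \<Omega> (borel :: real measure) = measurable (?P \<Otimes>\<^sub>M ?P) borel"
    by (rule measurable_cong_sets[OF sO refl])
  have X'm: "X' n \<in> borel_measurable \<Omega>" for n
  proof -
    have "(\<lambda>\<omega>. fst \<omega> n) \<in> borel_measurable (?P \<Otimes>\<^sub>M ?P)" by measurable
    then show ?thesis unfolding X'_def eM .
  qed
  have Y'm: "Y' n \<in> borel_measurable \<Omega>" for n
  proof -
    have "(\<lambda>\<omega>. snd \<omega> n) \<in> borel_measurable (?P \<Otimes>\<^sub>M ?P)" by measurable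
    then show ?thesis unfolding Y'_def eM .
  qed
  have lawX: "process_law \<Omega> X' = process_law M (\<lambda>n \<omega>. Vvec N (X n \<omega>) 1)"
  proof -
    have "process_law \<Omega> X' = distr \<Omega> ?P fst"
      unfolding process_law_def X'_def by simp
    also have "\<dots> = distr ?O ?P (fst \<circ> (\<lambda>\<omega>. (p1 \<omega>, p2 \<omega>)))"
      unfolding \<Omega>_def by (rule distr_distr[OF measurable_fst pm])
    also have "\<dots> = distr ?O ?P (\<lambda>\<omega> n. Vvec N (fst (Zc Gm (Fm N) \<omega> n)) 1)"
      by (simp add: comp_def p1_def Z_def)
    also have "\<dots> = distr M ?P (\<lambda>\<omega> n. Vvec N (X n \<omega>) 1)"
      using MC_law[OF mcA mcX, of "\<lambda>Q. Vvec N Q 1"] by simp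
    finally show ?thesis unfolding process_law_def .
  qed
  have lawY: "process_law \<Omega> Y' = process_law M' (\<lambda>n \<omega>. Vvec N (Y n \<omega>) 1)"
  proof -
    have "process_law \<Omega> Y' = distr \<Omega> ?P snd"
      unfolding process_law_def Y'_def by simp
    also have "\<dots> = distr ?O ?P (snd \<circ> (\<lambda>\<omega>. (p1 \<omega>, p2 \<omega>)))"
      unfolding \<Omega>_def by (rule distr_distr[OF measurable_snd pm])
    also have "\<dots> = distr ?O ?P (\<lambda>\<omega> n. Vvec N (snd (Zc Gm (Fm N) \<omega> n)) 1)"
      by (simp add: comp_def p2_def Z_def)
    also have "\<dots> = distr M' ?P (\<lambda>\<omega> n. Vvec N (Y n \<omega>) 1)"
      using MC_law[OF mcB mcY, of "\<lambda>Q. Vvec N Q 1"] by simp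
    finally show ?thesis unfolding process_law_def .
  qed
  have AEle: "AE \<omega> in \<Omega>. \<forall>n. X' n \<omega> \<le> Y' n \<omega>"
  proof -
    have setm: "{x \<in> space (?P \<Otimes>\<^sub>M ?P). \<forall>n. fst x n \<le> snd x n} \<in> sets (?P \<Otimes>\<^sub>M ?P)"
    proof (rule sets.sets_Collect_countable_All)
      fix n :: nat
      have f1: "(\<lambda>x. fst x n) \<in> borel_measurable (?P \<Otimes>\<^sub>M ?P)" by measurable
      have f2: "(\<lambda>x. snd x n) \<in> borel_measurable (?P \<Otimes>\<^sub>M ?P)" by measurable
      show "{x \<in> space (?P \<Otimes>\<^sub>M ?P). fst x n \<le> snd x n} \<in> sets (?P \<Otimes>\<^sub>M ?P)"
        by (rule borel_measurable_le[OF f1 f2])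
    qed
    have "AE \<omega> in ?O. \<forall>n. fst (p1 \<omega>, p2 \<omega>) n \<le> snd (p1 \<omega>, p2 \<omega>) n"
      using inv V1_le[OF N0] by (auto simp: p1_def p2_def)
    then show ?thesis unfolding \<Omega>_def X'_def Y'_def
      by (subst AE_distr_iff[OF pm setm])
  qed
  show ?thesis unfolding stoch_dominated_def
    using probO X'm Y'm lawX lawY AEle by blast
qed


end
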